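(* Let $K\ge 2$, let $\boldsymbol\alpha=(\alpha_1,\dots,\alpha_K)$ with all $\alpha_i>0$, and let $\boldsymbol\theta=(\theta_1,\dots,\theta_K)\sim\mathrm{Dir}(\boldsymbol\alpha)$. For a ranking $\pi$ (a bijection $\{1,\dots,K\}\to\{1,\dots,K\}$) define $$\tau(\pi,\pi^* )=\frac{2}{K(K-1)}\sum_{i\neq j}\mathbf 1_{\{\pi(i)>\pi(j)\}}\mathbf 1_{\{\theta_i>\theta_j\}} .$$ Let $$\Pi_{\boldsymbol\alpha}=\{\pi:\ \pi \text{ is a ranking of }\{1,\dots,K\}\text{ such that, for all } i,j,\ \pi(i)>\pi(j)\text{ only if }\alpha_i\ge\alpha_j\}.$$ Then $$\Pi_{\boldsymbol\alpha}=\mathop{\arg\max}_{\pi}\ \mathbb E\big[\tau(\pi,\pi^* )\,\big|\,\boldsymbol\theta\sim\mathrm{Dir}(\boldsymbol\alpha)\big],$$ where the maximum is over all rankings $\pi$ of $\{1,\dots,K\}$; in particular every ranking obtained by sorting the components of $\boldsymbol\alpha$ in decreasing order (ties broken arbitrarily) maximizes the expected value of $\tau$, and all such rankings achieve the same expected value.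
   Context: $\mathrm{Dir}(\boldsymbol\alpha)$ is the Dirichlet distribution on the open simplex $\{\boldsymbol\theta\in\mathbb R^K:\sum_i\theta_i=1,\theta_i>0\}$ with density $\frac{1}{\mathrm B(\boldsymbol\alpha)}\prod_i\theta_i^{\alpha_i-1}$. The "true ranking" $\pi^*$ is determined by $\boldsymbol\theta$ via $\pi^*(i)>\pi^*(j)$ iff $\theta_i>\theta_j$ (a higher rank value means more preferred); $\tau(\pi,\pi^* )$ is the normalized Kendall's tau agreement between $\pi$ and $\pi^*$, and the expectation is over $\boldsymbol\theta$. *)

theory Defs
  imports "HOL-Probability.Probability"
begin

text \<open>Indices are 0-based: the items are 0, ..., K-1.
  A point of the simplex is a vector theta :: nat => real (relevant on indices < K).\<close>

definition dir_beta :: "nat \<Rightarrow> (nat \<Rightarrow> real) \<Rightarrow> real" where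
  "dir_beta K \<alpha> = (\<Prod>i<K. Gamma (\<alpha> i)) / Gamma (\<Sum>i<K. \<alpha> i)"

definition dir_density :: "nat \<Rightarrow> (nat \<Rightarrow> real) \<Rightarrow> (nat \<Rightarrow> real) \<Rightarrow> real" where
  "dir_density K \<alpha> \<theta> =
     (if (\<forall>i<K. 0 < \<theta> i) then (\<Prod>i<K. \<theta> i powr (\<alpha> i - 1)) / dir_beta K \<alpha> else 0)"

definition simplex_extend :: "nat \<Rightarrow> (nat \<Rightarrow> real) \<Rightarrow> (nat \<Rightarrow> real)" where
  "simplex_extend K x =
     restrict (\<lambda>i. if i < K - 1 then x i else 1 - (\<Sum>j<K - 1. x j)) {..<K}"

text \<open>Dir(alpha) as a measure on vectors indexed by {..<K}: the density (w.r.t. Lebesgue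
  measure on the first K-1 coordinates) pushed forward to the simplex.\<close>
definition dirichlet :: "nat \<Rightarrow> (nat \<Rightarrow> real) \<Rightarrow> (nat \<Rightarrow> real) measure" where
  "dirichlet K \<alpha> =
     distr (density (PiM {..<K - 1} (\<lambda>_. lborel))
                    (\<lambda>x. ennreal (dir_density K \<alpha> (simplex_extend K x))))
           (PiM {..<K} (\<lambda>_. lborel)) (simplex_extend K)"

text \<open>Rankings: bijections of {0..K-1}; higher value = more preferred.\<close>
definition rankings :: "nat \<Rightarrow> (nat \<Rightarrow> nat) set" where
  "rankings K = {\<pi>. bij_betw \<pi> {..<K} {..<K}}"

definition kendall_tau :: "nat \<Rightarrow> (nat \<Rightarrow> nat) \<Rightarrow> (nat \<Rightarrow> real) \<Rightarrow> real" where
  "kendall_tau K \<pi> \<theta> = 2 / (real K * (real K - 1)) *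
     (\<Sum>i<K. \<Sum>j<K. if i \<noteq> j \<and> \<pi> i > \<pi> j \<and> \<theta> i > \<theta> j then 1 else 0)"

definition expected_tau :: "nat \<Rightarrow> (nat \<Rightarrow> real) \<Rightarrow> (nat \<Rightarrow> nat) \<Rightarrow> real" where
  "expected_tau K \<alpha> \<pi> = (\<integral>\<theta>. kendall_tau K \<pi> \<theta> \<partial>dirichlet K \<alpha>)"

definition Pi_alpha :: "nat \<Rightarrow> (nat \<Rightarrow> real) \<Rightarrow> (nat \<Rightarrow> nat) set" where
  "Pi_alpha K \<alpha> = {\<pi> \<in> rankings K. \<forall>i<K. \<forall>j<K. \<pi> i > \<pi> j \<longrightarrow> \<alpha> i \<ge> \<alpha> j}"

end

theory Submission
  imports Defs
begin


abbreviation "LL K \<equiv> PiM {..<K-1} (\<lambda>_::nat. (lborel::real measure))"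
abbreviation "TT K \<equiv> PiM {..<K} (\<lambda>_::nat. (lborel::real measure))"

lemma simplex_extend_meas: "simplex_extend K \<in> measurable (LL K) (TT K)"
  unfolding simplex_extend_def
proof (rule measurable_restrict)
  fix i assume "i \<in> {..<K}"
  show "(\<lambda>x. if i < K - 1 then x i else 1 - sum x {..<K - 1}) \<in> LL K \<rightarrow>\<^sub>M lborel"
  proof (cases "i < K - 1")
    case True then show ?thesis by simp
  next
    case False then show ?thesis by simp
  qed
qed



definition tr :: "nat \<Rightarrow> nat \<Rightarrow> nat \<Rightarrow> nat" where
  "tr a b k = (if k = a then b else if k = b then a else k)"

definition swp :: "nat \<Rightarrow> nat \<Rightarrow> (nat \<Rightarrow> real) \<Rightarrow> (nat \<Rightarrow> real)" where
  "swp a b \<theta> = (\<lambda>k. \<theta> (tr a b k))"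

lemma swp_meas:
  assumes "a < K" "b < K"
  shows "swp a b \<in> measurable (TT K) (TT K)"
  unfolding swp_def
proof (rule measurable_PiM_single')
  fix i assume "i \<in> {..<K}"
  then have "tr a b i \<in> {..<K}" using assms by (auto simp: tr_def)
  then show "(\<lambda>\<omega>. \<omega> (tr a b i)) \<in> TT K \<rightarrow>\<^sub>M lborel" by simp
next
  show "(\<lambda>\<omega> i. \<omega> (tr a b i)) \<in> space (TT K) \<rightarrow> (\<Pi>\<^sub>E i\<in>{..<K}. space lborel)"
    using assms by (auto simp: space_PiM PiE_def extensional_def tr_def)
qed

lemma sum_upd: "finite A \<Longrightarrow> a \<in> A \<Longrightarrow> sum (x(a := v)) A = v + sum x (A - {a})"
  by (simp add: sum.remove)

lemma swp_extend:
  assumes "a < K - 1"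
  shows "swp a (K-1) (simplex_extend K x) = simplex_extend K (x(a := 1 - sum x {..<K-1}))"
proof
  fix k
  have s: "sum (x(a := 1 - sum x {..<K-1})) {..<K-1} = 1 - sum x {..<K-1} + sum x ({..<K-1} - {a})"
    by (rule sum_upd) (use assms in auto)
  have s2: "sum x {..<K-1} = x a + sum x ({..<K-1} - {a})"
    using assms by (simp add: sum.remove)
  show "swp a (K - 1) (simplex_extend K x) k = simplex_extend K (x(a := 1 - sum x {..<K - 1})) k"
  proof (cases "k < K")
    case False then show ?thesis using assms by (auto simp add: swp_def tr_def simplex_extend_def)
  next
    case True
    consider "k = a" | "k = K - 1" | "k \<noteq> a" "k \<noteq> K - 1" by blast
    then show ?thesis
    proof cases
      case 1 then show ?thesis using assms True by (simp add: swp_def tr_def simplex_extend_def)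
    next
      case 2
      have "swp a (K - 1) (simplex_extend K x) k = x a" using assms True 2 by (auto simp add: swp_def tr_def simplex_extend_def)
      moreover have "simplex_extend K (x(a := 1 - sum x {..<K - 1})) k = 1 - sum (x(a := 1 - sum x {..<K-1})) {..<K-1}"
        using 2 True assms by (simp add: simplex_extend_def del: fun_upd_apply)
      ultimately show ?thesis unfolding s using s2 by simp
    next
      case 3 then show ?thesis using assms True by (simp add: swp_def tr_def simplex_extend_def)
    qed
  qed
qed

lemma swap_core:
  assumes a: "a < K - 1" and g[measurable]: "g \<in> borel_measurable (TT K)"
  shows "(\<integral>\<^sup>+x. g (simplex_extend K x) \<partial>LL K) = (\<integral>\<^sup>+x. g (swp a (K-1) (simplex_extend K x)) \<partial>LL K)"
proof -
  interpret product_sigma_finite "\<lambda>_::nat. (lborel::real measure)" by standard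
  define I where "I = {..<K-1} - {a}"
  have ins: "{..<K-1} = insert a I" and aI: "a \<notin> I" and fI: "finite I" using a by (auto simp: I_def)
  note E[measurable] = simplex_extend_meas[of K]
  have sw[measurable]: "swp a (K-1) \<in> measurable (TT K) (TT K)" by (rule swp_meas) (use a in auto)
  have m1: "(\<lambda>x. g (simplex_extend K x)) \<in> borel_measurable (LL K)" by measurable
  have m2: "(\<lambda>x. g (swp a (K-1) (simplex_extend K x))) \<in> borel_measurable (LL K)" by measurable
  have "(\<integral>\<^sup>+x. g (simplex_extend K x) \<partial>LL K) = 
     (\<integral>\<^sup>+ x. (\<integral>\<^sup>+ y. g (simplex_extend K (x(a := y))) \<partial>lborel) \<partial>(PiM I (\<lambda>_. lborel)))"
    using product_nn_integral_insert[OF fI aI, of "\<lambda>x. g (simplex_extend K x)"] m1 unfolding ins by simp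
  also have "\<dots> = (\<integral>\<^sup>+ x. (\<integral>\<^sup>+ y. g (swp a (K-1) (simplex_extend K (x(a := y)))) \<partial>lborel) \<partial>(PiM I (\<lambda>_. lborel)))"
  proof (rule nn_integral_cong)
    fix x assume x: "x \<in> space (PiM I (\<lambda>_. lborel::real measure))"
    have fm: "(\<lambda>y. g (simplex_extend K (x(a := y)))) \<in> borel_measurable borel"
      using measurable_comp[OF measurable_component_update[OF x aI] m1[unfolded ins]]
      by (simp add: comp_def)
    have "(\<integral>\<^sup>+ y. g (simplex_extend K (x(a := y))) \<partial>lborel) =
          ennreal \<bar>-1::real\<bar> * (\<integral>\<^sup>+ y. g (simplex_extend K (x(a := (1 - sum x I) + (-1) * y))) \<partial>lborel)"
      by (rule nn_integral_real_affine[OF fm]) simp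
    also have "\<dots> = (\<integral>\<^sup>+ y. g (swp a (K-1) (simplex_extend K (x(a := y)))) \<partial>lborel)"
    proof -
      have "\<And>y. swp a (K-1) (simplex_extend K (x(a := y))) = simplex_extend K (x(a := (1 - sum x I) + (-1) * y))"
      proof -
        fix y
        have su: "sum (x(a := y)) {..<K-1} = y + sum x I" unfolding ins using fI aI sum_upd[of "insert a I" a x y] by simp
        have "(x(a:=y))(a := 1 - sum (x(a:=y)) {..<K-1}) = x(a := (1 - sum x I) + (-1) * y)"
          unfolding su fun_upd_upd by (simp add: algebra_simps)
        then show "?thesis y" by (simp only: swp_extend[OF a])
      qed
      then show ?thesis by simp
    qed
    finally show "(\<integral>\<^sup>+ y. g (simplex_extend K (x(a := y))) \<partial>lborel) = (\<integral>\<^sup>+ y. g (swp a (K-1) (simplex_extend K (x(a := y)))) \<partial>lborel)" .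
  qed
  also have "\<dots> = (\<integral>\<^sup>+x. g (swp a (K-1) (simplex_extend K x)) \<partial>LL K)"
    using product_nn_integral_insert[OF fI aI, of "\<lambda>x. g (swp a (K-1) (simplex_extend K x))"] m2 unfolding ins by simp
  finally show ?thesis .
qed



lemma tr_comp: "tr a (K-1) (tr b (K-1) (tr a (K-1) k)) = tr a b k" if "a \<noteq> b" "a \<noteq> K-1" "b \<noteq> K-1"
  using that by (auto simp: tr_def)

lemma swp_comp: "swp a (K-1) (swp b (K-1) (swp a (K-1) \<theta>)) = swp a b \<theta>" if "a \<noteq> b" "a \<noteq> K-1" "b \<noteq> K-1"
  using that unfolding swp_def by (auto simp: tr_def)

lemma swp_sym: "swp a b = swp b a"
  by (auto simp: swp_def tr_def fun_eq_iff)

lemma swp_id: "swp a a \<theta> = \<theta>"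
  by (auto simp: swp_def tr_def)

lemma swap_inv:
  assumes a: "a < K" and b: "b < K" and g[measurable]: "g \<in> borel_measurable (TT K)"
  shows "(\<integral>\<^sup>+x. g (simplex_extend K x) \<partial>LL K) = (\<integral>\<^sup>+x. g (swp a b (simplex_extend K x)) \<partial>LL K)"
proof -
  consider "a = b" | "a = K - 1" "b \<noteq> a" | "b = K - 1" "b \<noteq> a" | "a < K - 1" "b < K - 1" "a \<noteq> b"
    using a b by linarith
  then show ?thesis
  proof cases
    case 1 then show ?thesis by (simp add: swp_id)
  next
    case 2 then show ?thesis using swap_core[of b K g] b g by (simp add: swp_sym)
  next
    case 3 then show ?thesis using swap_core[of a K g] a g by simp
  next
    case 4
    have s1[measurable]: "swp a (K-1) \<in> measurable (TT K) (TT K)" using a 4 by (intro swp_meas) auto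
    have s2[measurable]: "swp b (K-1) \<in> measurable (TT K) (TT K)" using b 4 by (intro swp_meas) auto
    have "(\<integral>\<^sup>+x. g (simplex_extend K x) \<partial>LL K) = (\<integral>\<^sup>+x. g (swp a (K-1) (simplex_extend K x)) \<partial>LL K)"
      using swap_core[of a K g] 4 by simp
    also have "\<dots> = (\<integral>\<^sup>+x. g (swp a (K-1) (swp b (K-1) (simplex_extend K x))) \<partial>LL K)"
    proof -
      have "(\<lambda>\<theta>. g (swp a (K-1) \<theta>)) \<in> borel_measurable (TT K)" by measurable
      then show ?thesis using swap_core[of b K "\<lambda>\<theta>. g (swp a (K-1) \<theta>)"] 4 by simp
    qed
    also have "\<dots> = (\<integral>\<^sup>+x. g (swp a (K-1) (swp b (K-1) (swp a (K-1) (simplex_extend K x)))) \<partial>LL K)"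
    proof -
      have "(\<lambda>\<theta>. g (swp a (K-1) (swp b (K-1) \<theta>))) \<in> borel_measurable (TT K)" by measurable
      then show ?thesis using swap_core[of a K "\<lambda>\<theta>. g (swp a (K-1) (swp b (K-1) \<theta>))"] 4 by simp
    qed
    also have "\<dots> = (\<integral>\<^sup>+x. g (swp a b (simplex_extend K x)) \<partial>LL K)"
      using 4 swp_comp[of a b K] by simp
    finally show ?thesis .
  qed
qed

lemma dens_meas: "dir_density K \<alpha> \<in> borel_measurable (TT K)"
  unfolding dir_density_def by measurable



lemma dir_beta_pos: assumes "K \<ge> 1" "\<forall>i<K. 0 < \<alpha> i" shows "dir_beta K \<alpha> > 0"
proof -
  have "(\<Prod>i<K. Gamma (\<alpha> i)) > 0" using assms by (intro prod_pos) (auto intro: Gamma_real_pos)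
  moreover have "(\<Sum>i<K. \<alpha> i) > 0" using assms by (intro sum_pos) (auto simp: lessThan_empty_iff)
  then have "Gamma (\<Sum>i<K. \<alpha> i) > 0" by (rule Gamma_real_pos)
  ultimately show ?thesis unfolding dir_beta_def by simp
qed

lemma swp_pos: assumes "i < K" "j < K" shows "(\<forall>k<K. 0 < swp i j \<theta> k) = (\<forall>k<K. 0 < \<theta> k)"
  using assms unfolding swp_def tr_def by (metis)

lemma prod_split2:
  fixes f :: "nat \<Rightarrow> real"
  assumes "i < K" "j < K" "i \<noteq> j"
  shows "(\<Prod>k<K. f k) = f i * f j * (\<Prod>k\<in>{..<K}-{i}-{j}. f k)"
proof -
  have "(\<Prod>k<K. f k) = f i * (\<Prod>k\<in>{..<K}-{i}. f k)" using assms by (simp add: prod.remove)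
  also have "(\<Prod>k\<in>{..<K}-{i}. f k) = f j * (\<Prod>k\<in>{..<K}-{i}-{j}. f k)" using assms by (subst prod.remove[of _ j]) auto
  finally show ?thesis by simp
qed

lemma dens_formula:
  assumes "i < K" "j < K" "i \<noteq> j" "\<forall>k<K. 0 < \<theta> k"
  shows "dir_density K \<alpha> \<theta> = \<theta> i powr (\<alpha> i - 1) * \<theta> j powr (\<alpha> j - 1) * (\<Prod>k\<in>{..<K}-{i}-{j}. \<theta> k powr (\<alpha> k - 1)) / dir_beta K \<alpha>"
    and "dir_density K \<alpha> (swp i j \<theta>) = \<theta> j powr (\<alpha> i - 1) * \<theta> i powr (\<alpha> j - 1) * (\<Prod>k\<in>{..<K}-{i}-{j}. \<theta> k powr (\<alpha> k - 1)) / dir_beta K \<alpha>"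
proof -
  show "dir_density K \<alpha> \<theta> = \<theta> i powr (\<alpha> i - 1) * \<theta> j powr (\<alpha> j - 1) * (\<Prod>k\<in>{..<K}-{i}-{j}. \<theta> k powr (\<alpha> k - 1)) / dir_beta K \<alpha>"
    using assms unfolding dir_density_def by (simp add: prod_split2[OF assms(1-3)])
  have p: "\<forall>k<K. 0 < swp i j \<theta> k" using swp_pos[OF assms(1,2)] assms(4) by simp
  have r: "(\<Prod>k\<in>{..<K}-{i}-{j}. swp i j \<theta> k powr (\<alpha> k - 1)) = (\<Prod>k\<in>{..<K}-{i}-{j}. \<theta> k powr (\<alpha> k - 1))"
    by (rule prod.cong) (auto simp: swp_def tr_def)
  show "dir_density K \<alpha> (swp i j \<theta>) = \<theta> j powr (\<alpha> i - 1) * \<theta> i powr (\<alpha> j - 1) * (\<Prod>k\<in>{..<K}-{i}-{j}. \<theta> k powr (\<alpha> k - 1)) / dir_beta K \<alpha>"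
    using p unfolding dir_density_def by (simp add: prod_split2[OF assms(1-3)] r) (simp add: swp_def tr_def)
qed

lemma key_ineq:
  fixes s t a b :: real
  assumes "0 < s" "s < t" "b \<le> a"
  shows "s powr (a - 1) * t powr (b - 1) \<le> t powr (a - 1) * s powr (b - 1)"
    and "b < a \<Longrightarrow> s powr (a - 1) * t powr (b - 1) < t powr (a - 1) * s powr (b - 1)"
proof -
  have e1: "s powr (a - 1) = s powr (a - b) * s powr (b - 1)" using assms by (simp add: powr_add[symmetric])
  have e2: "t powr (a - 1) = t powr (a - b) * t powr (b - 1)" using assms by (simp add: powr_add[symmetric])
  have A: "0 < s powr (b - 1) * t powr (b - 1)" using assms by simp
  have L: "s powr (a-1) * t powr (b-1) = s powr (a-b) * (s powr (b-1) * t powr (b-1))" by (simp add: e1 mult_ac)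
  have R: "t powr (a-1) * s powr (b-1) = t powr (a-b) * (s powr (b-1) * t powr (b-1))" by (simp add: e2 mult_ac)
  have "s powr (a - b) \<le> t powr (a - b)" using assms by (intro powr_mono2) auto
  then show "s powr (a - 1) * t powr (b - 1) \<le> t powr (a - 1) * s powr (b - 1)"
    unfolding L R using A by (intro mult_right_mono) auto
  assume "b < a"
  then have "s powr (a - b) < t powr (a - b)" using assms by (intro powr_less_mono2) auto
  then show "s powr (a - 1) * t powr (b - 1) < t powr (a - 1) * s powr (b - 1)"
    unfolding L R using A by (intro mult_strict_right_mono) auto
qed



lemma dens_zero: "\<not> (\<forall>k<K. 0 < \<theta> k) \<Longrightarrow> dir_density K \<alpha> \<theta> = 0"
  unfolding dir_density_def by (rule if_not_P)

lemma dens_nonneg: assumes "K \<ge> 1" "\<forall>k<K. 0 < \<alpha> k" shows "dir_density K \<alpha> \<theta> \<ge> 0"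
  using dir_beta_pos[OF assms] unfolding dir_density_def by (auto intro!: prod_nonneg divide_nonneg_pos)

lemma dens_swp_eq:
  assumes "i < K" "j < K" "\<alpha> i = \<alpha> j"
  shows "dir_density K \<alpha> (swp i j \<theta>) = dir_density K \<alpha> \<theta>"
proof (cases "i = j")
  case True then show ?thesis by (simp add: swp_id)
next
  case False
  show ?thesis
  proof (cases "\<forall>k<K. 0 < \<theta> k")
    case True
    show ?thesis unfolding dens_formula[OF assms(1,2) False True] using assms(3) by (simp add: mult_ac)
  next
    case F: False
    then have "\<not> (\<forall>k<K. 0 < swp i j \<theta> k)" using swp_pos[OF assms(1,2)] by simp
    then show ?thesis using F by (simp add: dens_zero)
  qed
qed

lemma dens_swp_le:
  assumes "i < K" "j < K" "\<alpha> j \<le> \<alpha> i" "\<theta> j < \<theta> i" "K \<ge> 1" "\<forall>k<K. 0 < \<alpha> k"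
  shows "dir_density K \<alpha> (swp i j \<theta>) \<le> dir_density K \<alpha> \<theta>"
proof -
  have ij: "i \<noteq> j" using assms(4) by auto
  show ?thesis
  proof (cases "\<forall>k<K. 0 < \<theta> k")
    case True
    have B: "dir_beta K \<alpha> > 0" using dir_beta_pos assms by auto
    have R: "(\<Prod>k\<in>{..<K}-{i}-{j}. \<theta> k powr (\<alpha> k - 1)) \<ge> 0" by (intro prod_nonneg) auto
    have "\<theta> j powr (\<alpha> i - 1) * \<theta> i powr (\<alpha> j - 1) \<le> \<theta> i powr (\<alpha> i - 1) * \<theta> j powr (\<alpha> j - 1)"
      using key_ineq(1)[of "\<theta> j" "\<theta> i" "\<alpha> j" "\<alpha> i"] assms True by auto
    then show ?thesis unfolding dens_formula[OF assms(1,2) ij True] using B R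
      by (intro divide_right_mono mult_right_mono) auto
  next
    case F: False
    then have "\<not> (\<forall>k<K. 0 < swp i j \<theta> k)" using swp_pos[OF assms(1,2)] by simp
    then show ?thesis using F by (simp add: dens_zero)
  qed
qed

lemma dens_swp_less:
  assumes "i < K" "j < K" "\<alpha> j < \<alpha> i" "\<theta> j < \<theta> i" "K \<ge> 1" "\<forall>k<K. 0 < \<alpha> k" "\<forall>k<K. 0 < \<theta> k"
  shows "dir_density K \<alpha> (swp i j \<theta>) < dir_density K \<alpha> \<theta>"
proof -
  have ij: "i \<noteq> j" using assms(4) by auto
  have B: "dir_beta K \<alpha> > 0" using dir_beta_pos assms by auto
  have R: "(\<Prod>k\<in>{..<K}-{i}-{j}. \<theta> k powr (\<alpha> k - 1)) > 0" using assms(7) by (intro prod_pos) auto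
  have "\<theta> j powr (\<alpha> i - 1) * \<theta> i powr (\<alpha> j - 1) < \<theta> i powr (\<alpha> i - 1) * \<theta> j powr (\<alpha> j - 1)"
    using key_ineq(2)[of "\<theta> j" "\<theta> i" "\<alpha> j" "\<alpha> i"] assms by auto
  then show ?thesis unfolding dens_formula[OF assms(1,2) ij assms(7)] using B R
    by (intro divide_strict_right_mono mult_strict_right_mono) auto
qed



lemma box_pts:
  fixes x :: "nat \<Rightarrow> real"
  assumes K: "K \<ge> 2" and i: "i < K" and d0: "d > 0" and d8: "2*d \<le> 1/4" and dK: "real (K-1) * (2*d) < 1/2"
   and xk: "\<And>k. k < K-1 \<Longrightarrow> (if k = i then 1/2 else 0) + d < x k \<and> x k < (if k = i then 1/2 else 0) + d + d"
  shows "(\<forall>k<K. 0 < simplex_extend K x k) \<and> (\<forall>j<K. j \<noteq> i \<longrightarrow> simplex_extend K x j < simplex_extend K x i)"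
proof -
  have ne: "{..<K-1} \<noteq> {}" using K by (auto simp: lessThan_empty_iff)
  have "(\<Sum>k<K-1. x k) < (\<Sum>k<K-1. (if k = i then 1/2 else 0) + d + d)" by (rule sum_strict_mono) (use xk ne in auto)
  also have "(\<Sum>k<K-1. (if k = i then 1/2 else 0) + d + d) = (\<Sum>k<K-1. (if k = i then 1/2 else (0::real))) + real (K-1) * (2 * d)"
    by (simp add: sum.distrib)
  also have "(\<Sum>k<K-1. (if k = i then 1/2 else (0::real))) = (if i < K - 1 then 1/2 else 0)"
    by (simp add: sum.delta)
  finally have S: "(\<Sum>k<K-1. x k) < (if i < K - 1 then 1/2 else 0) + real (K-1) * (2 * d)" .
  have xpos: "x k > 0" if "k < K - 1" for k
  proof -
    have "(if k = i then 1/2 else 0) + d < x k" using xk[OF that] by blast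
    moreover have "(if k = i then 1/2 else 0) + d > (0::real)" using d0 by simp
    ultimately show ?thesis by linarith
  qed
  have Spos: "(\<Sum>k<K-1. x k) \<ge> x k" if "k < K - 1" for k
  proof -
    have "(\<Sum>k<K-1. x k) = x k + (\<Sum>k\<in>{..<K-1}-{k}. x k)" using that by (simp add: sum.remove)
    moreover have "(\<Sum>k\<in>{..<K-1}-{k}. x k) \<ge> 0" using xpos by (intro sum_nonneg) (simp add: less_imp_le)
    ultimately show ?thesis by simp
  qed
  have E1: "simplex_extend K x k = x k" if "k < K - 1" for k using that by (auto simp add: simplex_extend_def)
  have E2: "simplex_extend K x (K-1) = 1 - (\<Sum>k<K-1. x k)" using K by (simp add: simplex_extend_def)
  have pos: "0 < simplex_extend K x k" if "k < K" for k
  proof (cases "k < K - 1")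
    case True then show ?thesis using E1 xpos by simp
  next
    case False then have "k = K - 1" using that by auto
    moreover have "(\<Sum>k<K-1. x k) < 1" using S dK by (auto split: if_splits)
    ultimately show ?thesis using E2 by simp
  qed
  have cmp: "simplex_extend K x j < simplex_extend K x i" if "j < K" "j \<noteq> i" for j
  proof (cases "i < K - 1")
    case True
    have xi: "x i > 1/2 + d" using xk[OF True] by simp
    show ?thesis
    proof (cases "j < K - 1")
      case True
      have "x j < 2 * d" using xk[OF True] \<open>j \<noteq> i\<close> by simp
      then show ?thesis using E1[OF True] E1[OF \<open>i < K - 1\<close>] xi d8 d0 by simp
    next
      case False then have "j = K - 1" using that by auto
      then show ?thesis using E1[OF True] E2 Spos[OF True] xi d0 by simp
    qed
  next
    case False then have ii: "i = K - 1" using i by auto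
    have jj: "j < K - 1" using that ii by auto
    have "x j < 2 * d" using xk[OF jj] \<open>j \<noteq> i\<close> by simp
    moreover have "(\<Sum>k<K-1. x k) < 1/2" using S False dK by simp
    ultimately show ?thesis using E1[OF jj] E2 ii d8 by simp
  qed
  show ?thesis using pos cmp by auto
qed

lemma box_lemma:
  assumes K: "K \<ge> 2" and i: "i < K"
  shows "\<exists>B \<in> sets (LL K). emeasure (LL K) B > 0 \<and>
     (\<forall>x\<in>B. (\<forall>k<K. 0 < simplex_extend K x k) \<and> (\<forall>j<K. j \<noteq> i \<longrightarrow> simplex_extend K x j < simplex_extend K x i))"
proof -
  interpret product_sigma_finite "\<lambda>_::nat. (lborel::real measure)" by standard
  define d :: real where "d = 1 / (4 * K)"
  have d0: "d > 0" using K by (simp add: d_def)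
  have d8: "2 * d \<le> 1/4" using K by (simp add: d_def field_simps)
  have dK: "real (K - 1) * (2 * d) < 1/2" using K by (simp add: d_def field_simps of_nat_diff)
  define lo where "lo k = (if k = i then 1/2 else 0) + d" for k
  define B where "B = PiE {..<K-1} (\<lambda>k. {lo k<..<lo k + d})"
  have Bs: "B \<in> sets (LL K)" unfolding B_def by (rule sets_PiM_I_finite) auto
  have "emeasure (LL K) B = (\<Prod>k<K-1. emeasure lborel {lo k<..<lo k + d})"
    unfolding B_def by (rule emeasure_PiM) auto
  also have "\<dots> = (\<Prod>k<K-1. ennreal d)" using d0 by simp
  also have "\<dots> = ennreal (d ^ (K-1))" using d0 by (simp only: prod_constant card_lessThan ennreal_power[OF less_imp_le[OF d0]])
  finally have eB: "emeasure (LL K) B = ennreal (d ^ (K-1))" .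
  have Bpos: "emeasure (LL K) B > 0" unfolding eB ennreal_less_zero_iff using d0 by (rule zero_less_power)
  have pts: "(\<forall>k<K. 0 < simplex_extend K x k) \<and> (\<forall>j<K. j \<noteq> i \<longrightarrow> simplex_extend K x j < simplex_extend K x i)"
    if x: "x \<in> B" for x
  proof (rule box_pts[OF K i d0 d8 dK])
    fix k assume k: "k < K - 1"
    have "x k \<in> {lo k<..<lo k + d}" using PiE_mem[of x "{..<K-1}" "\<lambda>k. {lo k<..<lo k+d}" k] x k unfolding B_def by blast
    then show "(if k = i then 1/2 else 0) + d < x k \<and> x k < (if k = i then 1/2 else 0) + d + d"
      unfolding lo_def by simp
  qed
  show ?thesis using Bs Bpos pts by blast
qed



definition Pij :: "nat \<Rightarrow> (nat \<Rightarrow> real) \<Rightarrow> nat \<Rightarrow> nat \<Rightarrow> ennreal" where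
  "Pij K \<alpha> i j = (\<integral>\<^sup>+x. ennreal (dir_density K \<alpha> (simplex_extend K x) *
      (if simplex_extend K x j < simplex_extend K x i then 1 else 0)) \<partial>LL K)"

definition Tot :: "nat \<Rightarrow> (nat \<Rightarrow> real) \<Rightarrow> ennreal" where
  "Tot K \<alpha> = (\<integral>\<^sup>+x. ennreal (dir_density K \<alpha> (simplex_extend K x)) \<partial>LL K)"

lemma P_swap:
  assumes "i < K" "j < K"
  shows "Pij K \<alpha> j i = (\<integral>\<^sup>+x. ennreal (dir_density K \<alpha> (swp i j (simplex_extend K x)) *
      (if simplex_extend K x j < simplex_extend K x i then 1 else 0)) \<partial>LL K)"
proof -
  note [measurable] = dens_meas
  define g where "g \<theta> = ennreal (dir_density K \<alpha> \<theta> * (if \<theta> i < \<theta> j then 1 else 0))" for \<theta>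
  have [measurable]: "(\<lambda>\<theta>. \<theta> i) \<in> borel_measurable (TT K)" "(\<lambda>\<theta>. \<theta> j) \<in> borel_measurable (TT K)"
    using assms by simp_all
  have gm: "g \<in> borel_measurable (TT K)" unfolding g_def by measurable
  have "Pij K \<alpha> j i = (\<integral>\<^sup>+x. g (simplex_extend K x) \<partial>LL K)" unfolding Pij_def g_def ..
  also have "\<dots> = (\<integral>\<^sup>+x. g (swp i j (simplex_extend K x)) \<partial>LL K)" by (rule swap_inv[OF assms gm])
  also have "\<dots> = (\<integral>\<^sup>+x. ennreal (dir_density K \<alpha> (swp i j (simplex_extend K x)) *
      (if simplex_extend K x j < simplex_extend K x i then 1 else 0)) \<partial>LL K)"
    unfolding g_def by (simp add: swp_def tr_def)
  finally show ?thesis .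
qed

lemma P_eq:
  assumes "i < K" "j < K" "\<alpha> i = \<alpha> j"
  shows "Pij K \<alpha> j i = Pij K \<alpha> i j"
  by (subst P_swap[OF assms(1,2)]) (simp add: Pij_def dens_swp_eq[OF assms])

lemma ind_le: "(if P then 1 else 0::real) \<le> 1" by simp

lemma P_le_Tot:
  assumes "K \<ge> 1" "\<forall>k<K. 0 < \<alpha> k"
  shows "Pij K \<alpha> i j \<le> Tot K \<alpha>"
  unfolding Pij_def Tot_def
  by (intro nn_integral_mono ennreal_leI) (use dens_nonneg[OF assms] in \<open>auto intro: mult_left_le\<close>)

lemma P_le:
  assumes "K \<ge> 1" "\<forall>k<K. 0 < \<alpha> k" "i < K" "j < K" "\<alpha> j \<le> \<alpha> i"
  shows "Pij K \<alpha> j i \<le> Pij K \<alpha> i j"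
  apply (subst P_swap[OF assms(3,4)])
  unfolding Pij_def
proof (intro nn_integral_mono ennreal_leI)
  fix x
  show "dir_density K \<alpha> (swp i j (simplex_extend K x)) * (if simplex_extend K x j < simplex_extend K x i then 1 else 0)
        \<le> dir_density K \<alpha> (simplex_extend K x) * (if simplex_extend K x j < simplex_extend K x i then 1 else 0)"
    using dens_swp_le[OF assms(3,4,5) _ assms(1,2)] by simp
qed

lemma P_less:
  assumes K: "K \<ge> 2" and ap: "\<forall>k<K. 0 < \<alpha> k" and i: "i < K" and j: "j < K" and a: "\<alpha> j < \<alpha> i"
    and fin: "Tot K \<alpha> \<noteq> \<infinity>"
  shows "Pij K \<alpha> j i < Pij K \<alpha> i j"
proof -
  have K1: "K \<ge> 1" using K by simp
  note [measurable] = dens_meas simplex_extend_meas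
  have [measurable]: "swp i j \<in> measurable (TT K) (TT K)" using i j by (rule swp_meas)
  have [measurable]: "(\<lambda>\<theta>. \<theta> i) \<in> borel_measurable (TT K)" "(\<lambda>\<theta>. \<theta> j) \<in> borel_measurable (TT K)"
    using i j by simp_all
  define f where "f x = ennreal (dir_density K \<alpha> (swp i j (simplex_extend K x)) *
      (if simplex_extend K x j < simplex_extend K x i then 1 else 0))" for x
  define g where "g x = ennreal (dir_density K \<alpha> (simplex_extend K x) *
      (if simplex_extend K x j < simplex_extend K x i then 1 else 0))" for x
  have fm: "f \<in> borel_measurable (LL K)" unfolding f_def by measurable
  have gm: "g \<in> borel_measurable (LL K)" unfolding g_def by measurable
  have fP: "(\<integral>\<^sup>+x. f x \<partial>LL K) = Pij K \<alpha> j i" unfolding f_def P_swap[OF i j] ..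
  have gP: "(\<integral>\<^sup>+x. g x \<partial>LL K) = Pij K \<alpha> i j" unfolding g_def Pij_def ..
  have "(\<integral>\<^sup>+x. f x \<partial>LL K) \<noteq> \<infinity>"
    unfolding fP using P_le_Tot[OF K1 ap, of j i] fin by (metis infinity_ennreal_def neq_top_trans)
  moreover have "AE x in LL K. f x \<le> g x"
    unfolding f_def g_def using dens_swp_le[OF i j less_imp_le[OF a] _ K1 ap] by (intro AE_I2 ennreal_leI) simp
  moreover have "\<not> (AE x in LL K. g x \<le> f x)"
  proof
    assume AE: "AE x in LL K. g x \<le> f x"
    obtain B where B: "B \<in> sets (LL K)" "emeasure (LL K) B > 0"
      and Bp: "\<And>x. x \<in> B \<Longrightarrow> (\<forall>k<K. 0 < simplex_extend K x k) \<and> (\<forall>j<K. j \<noteq> i \<longrightarrow> simplex_extend K x j < simplex_extend K x i)"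
      using box_lemma[OF K i] by blast
    have lt: "f x < g x" if "x \<in> B" for x
    proof -
      have ij: "j \<noteq> i" using a by auto
      have c: "simplex_extend K x j < simplex_extend K x i" using Bp[OF that] j ij by auto
      have "dir_density K \<alpha> (swp i j (simplex_extend K x)) < dir_density K \<alpha> (simplex_extend K x)"
        using dens_swp_less[OF i j a c K1 ap] Bp[OF that] by auto
      then show ?thesis unfolding f_def g_def using c dens_nonneg[OF K1 ap]
        by (simp add: ennreal_less_iff)
    qed
    have "AE x in LL K. \<not> (x \<in> B)" using AE by eventually_elim (use lt in force)
    then have "emeasure (LL K) {x \<in> space (LL K). x \<in> B} = 0" by (rule emeasure_eq_0_AE)
    moreover have "{x \<in> space (LL K). x \<in> B} = B" using sets.sets_into_space[OF B(1)] by auto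
    ultimately show False using B(2) by simp
  qed
  ultimately have "(\<integral>\<^sup>+x. f x \<partial>LL K) < (\<integral>\<^sup>+x. g x \<partial>LL K)" by (intro nn_integral_less[OF fm gm])
  then show ?thesis unfolding fP gP .
qed



definition phi :: "real \<Rightarrow> real \<Rightarrow> real" where
  "phi b t = (if t \<in> {0..1} then t powr (b - 1) else 0)"

lemma phi_meas[measurable]: "phi b \<in> borel_measurable borel"
  unfolding phi_def by measurable

lemma phi_nonneg: "phi b t \<ge> 0" by (simp add: phi_def)

lemma phi_fin:
  assumes "b > 0"
  shows "(\<integral>\<^sup>+t. ennreal (phi b t) \<partial>lborel) < \<infinity>"
proof -
  have "((\<lambda>x. x powr (b - 1)) has_integral (1 powr (b - 1 + 1) / (b - 1 + 1))) {0..1}"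
    by (rule has_integral_powr_from_0) (use assms in auto)
  then have "(phi b has_integral (1 / b)) UNIV"
    unfolding phi_def has_integral_restrict_UNIV by simp
  then have "(\<integral>\<^sup>+t. ennreal (phi b t) \<partial>lborel) = ennreal (1 / b)"
    by (intro nn_integral_has_integral_lborel) (auto simp: phi_nonneg)
  then show ?thesis by simp
qed

lemma prod_fin:
  fixes \<psi> :: "nat \<Rightarrow> real \<Rightarrow> real"
  assumes m: "\<And>k. \<psi> k \<in> borel_measurable borel" and nn: "\<And>k t. \<psi> k t \<ge> 0"
    and f: "\<And>k. k < n \<Longrightarrow> (\<integral>\<^sup>+t. ennreal (\<psi> k t) \<partial>lborel) < \<infinity>"
  shows "(\<integral>\<^sup>+x. ennreal (\<Prod>k<n. \<psi> k (x k)) \<partial>PiM {..<n} (\<lambda>_. lborel)) < \<infinity>"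
proof -
  interpret product_sigma_finite "\<lambda>_::nat. (lborel::real measure)" by standard
  have "(\<integral>\<^sup>+x. ennreal (\<Prod>k<n. \<psi> k (x k)) \<partial>PiM {..<n} (\<lambda>_. lborel)) =
        (\<integral>\<^sup>+x. (\<Prod>k<n. ennreal (\<psi> k (x k))) \<partial>PiM {..<n} (\<lambda>_. lborel))"
    using nn by (simp add: prod_ennreal)
  also have "\<dots> = (\<Prod>k<n. (\<integral>\<^sup>+t. ennreal (\<psi> k t) \<partial>lborel))"
    by (rule product_nn_integral_prod) (use m in auto)
  also have "\<dots> < \<infinity>" using f by (simp add: ennreal_prod_eq_top less_top[symmetric])
  finally show ?thesis .
qed

definition Gm :: "nat \<Rightarrow> (nat \<Rightarrow> real) \<Rightarrow> nat \<Rightarrow> (nat \<Rightarrow> real) \<Rightarrow> real" where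
  "Gm K \<beta> m \<theta> = (\<Prod>k\<in>{..<K}-{m}. phi (\<beta> k) (\<theta> k))"

lemma tr_tr: "tr a b (tr a b k) = k" by (auto simp: tr_def)

lemma tr_bij: assumes "m < K" shows "bij_betw (tr m (K-1)) {..<K-1} ({..<K}-{m})"
proof (rule bij_betw_imageI)
  show "inj_on (tr m (K-1)) {..<K-1}" by (metis inj_onI tr_tr)
  show "tr m (K-1) ` {..<K-1} = {..<K}-{m}"
  proof
    show "tr m (K-1) ` {..<K-1} \<subseteq> {..<K}-{m}" using assms by (auto simp: tr_def)
    show "{..<K}-{m} \<subseteq> tr m (K-1) ` {..<K-1}"
    proof
      fix k assume k: "k \<in> {..<K}-{m}"
      have "tr m (K-1) k \<in> {..<K-1}" using k assms by (auto simp: tr_def)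
      then show "k \<in> tr m (K-1) ` {..<K-1}" using tr_tr[of m "K-1" k] by (metis image_eqI)
    qed
  qed
qed

lemma G_fin:
  assumes K: "K \<ge> 2" and m: "m < K" and b: "\<forall>k<K. \<beta> k > 0"
  shows "(\<integral>\<^sup>+x. ennreal (Gm K \<beta> m (simplex_extend K x)) \<partial>LL K) < \<infinity>"
proof -
  have gm: "(\<lambda>\<theta>. ennreal (Gm K \<beta> m \<theta>)) \<in> borel_measurable (TT K)"
    unfolding Gm_def by measurable
  have K1: "K - 1 < K" using K by simp
  have "(\<integral>\<^sup>+x. ennreal (Gm K \<beta> m (simplex_extend K x)) \<partial>LL K) =
        (\<integral>\<^sup>+x. ennreal (Gm K \<beta> m (swp m (K-1) (simplex_extend K x))) \<partial>LL K)"
    by (rule swap_inv[OF m K1 gm])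
  also have "\<dots> = (\<integral>\<^sup>+x. ennreal (\<Prod>k<K-1. phi (\<beta> (tr m (K-1) k)) (x k)) \<partial>LL K)"
  proof (rule nn_integral_cong)
    fix x
    have "Gm K \<beta> m (swp m (K-1) (simplex_extend K x)) =
       (\<Prod>k\<in>{..<K}-{m}. phi (\<beta> k) (simplex_extend K x (tr m (K-1) k)))"
      unfolding Gm_def swp_def ..
    also have "\<dots> = (\<Prod>k<K-1. phi (\<beta> (tr m (K-1) k)) (simplex_extend K x (tr m (K-1) (tr m (K-1) k))))"
      by (rule prod.reindex_bij_betw[OF tr_bij[OF m], symmetric])
    also have "\<dots> = (\<Prod>k<K-1. phi (\<beta> (tr m (K-1) k)) (x k))"
      by (rule prod.cong) (auto simp: tr_tr simplex_extend_def)
    finally show "ennreal (Gm K \<beta> m (swp m (K-1) (simplex_extend K x))) = ennreal (\<Prod>k<K-1. phi (\<beta> (tr m (K-1) k)) (x k))"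
      by simp
  qed
  also have "\<dots> < \<infinity>"
  proof (rule prod_fin)
    fix k assume k: "k < K - 1"
    have "tr m (K-1) k < K" using k m by (auto simp: tr_def)
    then show "(\<integral>\<^sup>+t. ennreal (phi (\<beta> (tr m (K-1) k)) t) \<partial>lborel) < \<infinity>" using b by (intro phi_fin) auto
  qed (auto simp: phi_nonneg)
  finally show ?thesis .
qed



lemma sum_extend: assumes "K \<ge> 1" shows "(\<Sum>k<K. simplex_extend K x k) = 1"
proof -
  have "{..<K} = insert (K-1) {..<K-1}" using assms by auto
  then have "(\<Sum>k<K. simplex_extend K x k) = simplex_extend K x (K-1) + (\<Sum>k<K-1. simplex_extend K x k)"
    by simp
  also have "(\<Sum>k<K-1. simplex_extend K x k) = (\<Sum>k<K-1. x k)"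
    by (rule sum.cong) (auto simp: simplex_extend_def)
  also have "simplex_extend K x (K-1) = 1 - (\<Sum>k<K-1. x k)" using assms by (simp add: simplex_extend_def)
  finally show ?thesis by simp
qed

lemma Gm_nonneg: "Gm K \<beta> m \<theta> \<ge> 0" unfolding Gm_def by (intro prod_nonneg) (auto simp: phi_nonneg)

lemma pow_bound:
  fixes t e :: real
  assumes "real K \<ge> 1" "1 / real K \<le> t" "e \<le> 0" "e > -1"
  shows "t powr e \<le> real K"
proof -
  have Kp: "real K > 0" using assms by simp
  have "t powr e \<le> (1 / real K) powr e" by (rule powr_mono2') (use assms Kp in auto)
  also have "(1 / real K) powr e = real K powr (- e)" using Kp by (simp add: powr_divide powr_minus_divide)
  also have "\<dots> \<le> real K powr 1" by (rule powr_mono) (use assms in auto)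
  finally show ?thesis using Kp by simp
qed

lemma dens_bound:
  assumes K: "K \<ge> 2" and ap: "\<forall>k<K. 0 < \<alpha> k"
  shows "dir_density K \<alpha> (simplex_extend K x) \<le>
     real K / dir_beta K \<alpha> * (\<Sum>m<K. Gm K (\<lambda>k. min (\<alpha> k) 1) m (simplex_extend K x))"
proof -
  define \<theta> where "\<theta> = simplex_extend K x"
  define \<beta> where "\<beta> k = min (\<alpha> k) 1" for k
  have K1: "K \<ge> 1" using K by simp
  have B: "dir_beta K \<alpha> > 0" using dir_beta_pos[OF K1 ap] .
  have RHS: "real K / dir_beta K \<alpha> * (\<Sum>m<K. Gm K \<beta> m \<theta>) \<ge> 0"
    using B by (intro mult_nonneg_nonneg sum_nonneg) (auto simp: Gm_nonneg)
  show ?thesis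
  proof (cases "\<forall>k<K. 0 < \<theta> k")
    case False
    then show ?thesis using RHS unfolding \<theta>_def \<beta>_def by (simp add: dens_zero)
  next
    case True
    have S: "(\<Sum>k<K. \<theta> k) = 1" unfolding \<theta>_def by (rule sum_extend[OF K1])
    have le1: "\<theta> k \<le> 1" if "k < K" for k
    proof -
      have "\<theta> k \<le> (\<Sum>k<K. \<theta> k)" by (rule member_le_sum) (use True that in auto)
      then show ?thesis using S by simp
    qed
    have "\<exists>m<K. \<theta> m \<ge> 1 / real K"
    proof (rule ccontr)
      assume "\<not> (\<exists>m<K. \<theta> m \<ge> 1 / real K)"
      then have lt: "\<theta> k < 1 / real K" if "k < K" for k using that by (meson not_le)
      have "(\<Sum>k<K. \<theta> k) < (\<Sum>k<K. 1 / real K)" by (rule sum_strict_mono) (use lt K in \<open>auto simp: lessThan_empty_iff\<close>)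
      then show False using S K by simp
    qed
    then obtain m where m: "m < K" "\<theta> m \<ge> 1 / real K" by blast
    have "(\<Prod>k<K. \<theta> k powr (\<alpha> k - 1)) \<le> (\<Prod>k<K. \<theta> k powr (\<beta> k - 1))"
      by (rule prod_mono) (use True le1 in \<open>auto simp: \<beta>_def intro!: powr_mono'\<close>)
    also have "(\<Prod>k<K. \<theta> k powr (\<beta> k - 1)) = \<theta> m powr (\<beta> m - 1) * (\<Prod>k\<in>{..<K}-{m}. \<theta> k powr (\<beta> k - 1))"
      using m by (simp add: prod.remove)
    also have "(\<Prod>k\<in>{..<K}-{m}. \<theta> k powr (\<beta> k - 1)) = Gm K \<beta> m \<theta>"
      unfolding Gm_def by (rule prod.cong) (use True le1 in \<open>auto simp: phi_def less_imp_le\<close>)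
    also have "\<theta> m powr (\<beta> m - 1) * Gm K \<beta> m \<theta> \<le> real K * Gm K \<beta> m \<theta>"
      by (intro mult_right_mono pow_bound) (use K m ap in \<open>auto simp: \<beta>_def Gm_nonneg\<close>)
    also have "\<dots> \<le> real K * (\<Sum>m<K. Gm K \<beta> m \<theta>)"
      by (intro mult_left_mono member_le_sum) (use m in \<open>auto simp: Gm_nonneg\<close>)
    finally have P: "(\<Prod>k<K. \<theta> k powr (\<alpha> k - 1)) \<le> real K * (\<Sum>m<K. Gm K \<beta> m \<theta>)" .
    have "dir_density K \<alpha> \<theta> = (\<Prod>k<K. \<theta> k powr (\<alpha> k - 1)) / dir_beta K \<alpha>"
      using True unfolding dir_density_def by simp
    also have "\<dots> \<le> real K * (\<Sum>m<K. Gm K \<beta> m \<theta>) / dir_beta K \<alpha>"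
      using P B by (intro divide_right_mono) auto
    finally show ?thesis unfolding \<theta>_def \<beta>_def by simp
  qed
qed

lemma Tot_fin:
  assumes K: "K \<ge> 2" and ap: "\<forall>k<K. 0 < \<alpha> k"
  shows "Tot K \<alpha> < \<infinity>"
proof -
  define \<beta> where "\<beta> k = min (\<alpha> k) 1" for k
  define c where "c = real K / dir_beta K \<alpha>"
  have K1: "K \<ge> 1" using K by simp
  have c0: "c \<ge> 0" using dir_beta_pos[OF K1 ap] by (simp add: c_def)
  note [measurable] = simplex_extend_meas
  have Gmeas[measurable]: "(\<lambda>x. ennreal (Gm K \<beta> m (simplex_extend K x))) \<in> borel_measurable (LL K)" for m
  proof -
    have "(\<lambda>\<theta>. ennreal (Gm K \<beta> m \<theta>)) \<in> borel_measurable (TT K)" unfolding Gm_def by measurable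
    then show ?thesis by (rule measurable_compose[OF simplex_extend_meas])
  qed
  have "Tot K \<alpha> \<le> (\<integral>\<^sup>+x. ennreal (c * (\<Sum>m<K. Gm K \<beta> m (simplex_extend K x))) \<partial>LL K)"
    unfolding Tot_def c_def \<beta>_def by (intro nn_integral_mono ennreal_leI dens_bound[OF K ap])
  also have "\<dots> = (\<integral>\<^sup>+x. ennreal c * (\<Sum>m<K. ennreal (Gm K \<beta> m (simplex_extend K x))) \<partial>LL K)"
    using c0 by (simp add: ennreal_mult Gm_nonneg sum_nonneg)
  also have "\<dots> = ennreal c * (\<integral>\<^sup>+x. (\<Sum>m<K. ennreal (Gm K \<beta> m (simplex_extend K x))) \<partial>LL K)"
    by (rule nn_integral_cmult) measurable
  also have "(\<integral>\<^sup>+x. (\<Sum>m<K. ennreal (Gm K \<beta> m (simplex_extend K x))) \<partial>LL K) =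
     (\<Sum>m<K. (\<integral>\<^sup>+x. ennreal (Gm K \<beta> m (simplex_extend K x)) \<partial>LL K))"
    by (rule nn_integral_sum) measurable
  also have "ennreal c * \<dots> < \<infinity>"
  proof -
    have s: "(\<Sum>m<K. (\<integral>\<^sup>+x. ennreal (Gm K \<beta> m (simplex_extend K x)) \<partial>LL K)) < \<infinity>"
      using G_fin[OF K _, of _ \<beta>] ap by (simp add: \<beta>_def)
    have "ennreal c < \<infinity>" by simp
    then show ?thesis using s unfolding infinity_ennreal_def ennreal_mult_less_top by blast
  qed
  finally show ?thesis .
qed



lemma tau_meas: "kendall_tau K \<pi> \<in> borel_measurable (TT K)"
  unfolding kendall_tau_def by measurable

lemma tau_nonneg: "K \<ge> 2 \<Longrightarrow> kendall_tau K \<pi> \<theta> \<ge> 0"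
  unfolding kendall_tau_def by (intro mult_nonneg_nonneg sum_nonneg) auto

lemma exp_formula:
  assumes K: "K \<ge> 2" and ap: "\<forall>k<K. 0 < \<alpha> k"
  shows "expected_tau K \<alpha> \<pi> = 2 / (real K * (real K - 1)) *
     (\<Sum>i<K. \<Sum>j<K. if i \<noteq> j \<and> \<pi> j < \<pi> i then enn2real (Pij K \<alpha> i j) else 0)"
proof -
  define c where "c = 2 / (real K * (real K - 1))"
  have c0: "c \<ge> 0" using K by (simp add: c_def)
  have K1: "K \<ge> 1" using K by simp
  note [measurable] = simplex_extend_meas tau_meas dens_meas
  define dn where "dn x = ennreal (dir_density K \<alpha> (simplex_extend K x))" for x
  have dnm[measurable]: "dn \<in> borel_measurable (LL K)" unfolding dn_def by measurable
  define h where "h i j x = ennreal (dir_density K \<alpha> (simplex_extend K x) *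
      (if simplex_extend K x j < simplex_extend K x i then 1 else 0))" for i j x
  have hm[measurable]: "h i j \<in> borel_measurable (LL K)" if "i < K" "j < K" for i j
  proof -
    have [measurable]: "(\<lambda>\<theta>. \<theta> i) \<in> borel_measurable (TT K)" "(\<lambda>\<theta>. \<theta> j) \<in> borel_measurable (TT K)"
      using that by simp_all
    show ?thesis unfolding h_def by measurable
  qed
  have "expected_tau K \<alpha> \<pi> = enn2real (\<integral>\<^sup>+\<theta>. ennreal (kendall_tau K \<pi> \<theta>) \<partial>dirichlet K \<alpha>)"
    unfolding expected_tau_def
    by (rule integral_eq_nn_integral) (auto simp: dirichlet_def tau_nonneg[OF K])
  also have "(\<integral>\<^sup>+\<theta>. ennreal (kendall_tau K \<pi> \<theta>) \<partial>dirichlet K \<alpha>) =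
      (\<integral>\<^sup>+x. dn x * ennreal (kendall_tau K \<pi> (simplex_extend K x)) \<partial>LL K)"
  proof -
    have Ed: "simplex_extend K \<in> measurable (density (LL K) dn) (TT K)"
      using simplex_extend_meas[of K] by simp
    have tm: "(\<lambda>\<theta>. ennreal (kendall_tau K \<pi> \<theta>)) \<in> borel_measurable (distr (density (LL K) dn) (TT K) (simplex_extend K))"
      by simp
    have t2: "(\<lambda>x. ennreal (kendall_tau K \<pi> (simplex_extend K x))) \<in> borel_measurable (LL K)" by measurable
    show ?thesis unfolding dirichlet_def dn_def[symmetric]
      unfolding nn_integral_distr[OF Ed tm] nn_integral_density[OF dnm t2] ..
  qed
  also have "\<dots> = (\<integral>\<^sup>+x. ennreal c * (\<Sum>i<K. \<Sum>j<K. if i \<noteq> j \<and> \<pi> j < \<pi> i then h i j x else 0) \<partial>LL K)"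
  proof (rule nn_integral_cong)
    fix x
    have "dir_density K \<alpha> (simplex_extend K x) * kendall_tau K \<pi> (simplex_extend K x) =
       c * (\<Sum>i<K. \<Sum>j<K. if i \<noteq> j \<and> \<pi> j < \<pi> i then dir_density K \<alpha> (simplex_extend K x) *
      (if simplex_extend K x j < simplex_extend K x i then 1 else 0) else 0)"
    proof -
      let ?d = "dir_density K \<alpha> (simplex_extend K x)"
      let ?t = "simplex_extend K x"
      have "?d * kendall_tau K \<pi> ?t = ?d * (c * (\<Sum>i<K. \<Sum>j<K. if i \<noteq> j \<and> \<pi> i > \<pi> j \<and> ?t i > ?t j then 1 else 0))"
        unfolding kendall_tau_def c_def ..
      also have "\<dots> = c * (\<Sum>i<K. \<Sum>j<K. ?d * (if i \<noteq> j \<and> \<pi> i > \<pi> j \<and> ?t i > ?t j then 1 else 0))"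
        by (simp add: sum_distrib_left mult.left_commute)
      also have "(\<Sum>i<K. \<Sum>j<K. ?d * (if i \<noteq> j \<and> \<pi> i > \<pi> j \<and> ?t i > ?t j then 1 else 0)) =
         (\<Sum>i<K. \<Sum>j<K. if i \<noteq> j \<and> \<pi> j < \<pi> i then ?d * (if ?t j < ?t i then 1 else 0) else 0)"
        by (intro sum.cong refl) auto
      finally show ?thesis .
    qed
    then have E: "dir_density K \<alpha> (simplex_extend K x) * kendall_tau K \<pi> (simplex_extend K x) =
       c * (\<Sum>i<K. \<Sum>j<K. if i \<noteq> j \<and> \<pi> j < \<pi> i then dir_density K \<alpha> (simplex_extend K x) *
      (if simplex_extend K x j < simplex_extend K x i then 1 else 0) else 0)" .
    have dnn: "dir_density K \<alpha> (simplex_extend K x) \<ge> 0" by (rule dens_nonneg[OF K1 ap])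
    have "dn x * ennreal (kendall_tau K \<pi> (simplex_extend K x)) =
       ennreal (dir_density K \<alpha> (simplex_extend K x) * kendall_tau K \<pi> (simplex_extend K x))"
      unfolding dn_def using dnn tau_nonneg[OF K] by (simp add: ennreal_mult)
    also have "\<dots> = ennreal c * ennreal (\<Sum>i<K. \<Sum>j<K. if i \<noteq> j \<and> \<pi> j < \<pi> i then dir_density K \<alpha> (simplex_extend K x) *
      (if simplex_extend K x j < simplex_extend K x i then 1 else 0) else 0)"
      unfolding E using c0 dnn by (intro ennreal_mult sum_nonneg) auto
    also have "ennreal (\<Sum>i<K. \<Sum>j<K. if i \<noteq> j \<and> \<pi> j < \<pi> i then dir_density K \<alpha> (simplex_extend K x) *
      (if simplex_extend K x j < simplex_extend K x i then 1 else 0) else 0) =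
      (\<Sum>i<K. \<Sum>j<K. if i \<noteq> j \<and> \<pi> j < \<pi> i then h i j x else 0)"
      unfolding h_def using dnn by (simp add: sum_nonneg flip: sum_ennreal) (intro sum.cong refl, auto)
    finally show "dn x * ennreal (kendall_tau K \<pi> (simplex_extend K x)) =
      ennreal c * (\<Sum>i<K. \<Sum>j<K. if i \<noteq> j \<and> \<pi> j < \<pi> i then h i j x else 0)" .
  qed
  also have "\<dots> = ennreal c * (\<Sum>i<K. \<Sum>j<K. if i \<noteq> j \<and> \<pi> j < \<pi> i then Pij K \<alpha> i j else 0)"
  proof -
    have m1: "(\<lambda>x. if i \<noteq> j \<and> \<pi> j < \<pi> i then h i j x else 0) \<in> borel_measurable (LL K)" if "i < K" "j < K" for i j
      using hm[OF that] by simp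
    have m2: "(\<lambda>x. \<Sum>j<K. if i \<noteq> j \<and> \<pi> j < \<pi> i then h i j x else 0) \<in> borel_measurable (LL K)" if "i < K" for i
      by (rule borel_measurable_sum, rule m1) (use that in auto)
    have m3: "(\<lambda>x. \<Sum>i<K. \<Sum>j<K. if i \<noteq> j \<and> \<pi> j < \<pi> i then h i j x else 0) \<in> borel_measurable (LL K)"
      by (rule borel_measurable_sum, rule m2) auto
    have "(\<integral>\<^sup>+x. ennreal c * (\<Sum>i<K. \<Sum>j<K. if i \<noteq> j \<and> \<pi> j < \<pi> i then h i j x else 0) \<partial>LL K) =
       ennreal c * (\<integral>\<^sup>+x. (\<Sum>i<K. \<Sum>j<K. if i \<noteq> j \<and> \<pi> j < \<pi> i then h i j x else 0) \<partial>LL K)"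
      by (rule nn_integral_cmult[OF m3])
    also have "(\<integral>\<^sup>+x. (\<Sum>i<K. \<Sum>j<K. if i \<noteq> j \<and> \<pi> j < \<pi> i then h i j x else 0) \<partial>LL K) =
       (\<Sum>i<K. \<integral>\<^sup>+x. (\<Sum>j<K. if i \<noteq> j \<and> \<pi> j < \<pi> i then h i j x else 0) \<partial>LL K)"
      by (rule nn_integral_sum, rule m2) auto
    also have "\<dots> = (\<Sum>i<K. \<Sum>j<K. \<integral>\<^sup>+x. (if i \<noteq> j \<and> \<pi> j < \<pi> i then h i j x else 0) \<partial>LL K)"
      by (intro sum.cong refl nn_integral_sum m1) auto
    also have "\<dots> = (\<Sum>i<K. \<Sum>j<K. if i \<noteq> j \<and> \<pi> j < \<pi> i then Pij K \<alpha> i j else 0)"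
      by (intro sum.cong refl) (auto simp: Pij_def h_def)
    finally show ?thesis .
  qed
  also have "enn2real \<dots> = c * (\<Sum>i<K. \<Sum>j<K. if i \<noteq> j \<and> \<pi> j < \<pi> i then enn2real (Pij K \<alpha> i j) else 0)"
  proof -
    have Pt: "Pij K \<alpha> i j < top" for i j
      using P_le_Tot[OF K1 ap, of i j] Tot_fin[OF K ap] by (simp add: le_less_trans)
    have t1: "(if i \<noteq> j \<and> \<pi> j < \<pi> i then Pij K \<alpha> i j else 0) < top" for i j using Pt by simp
    have t2: "(\<Sum>j<K. if i \<noteq> j \<and> \<pi> j < \<pi> i then Pij K \<alpha> i j else 0) < top" for i
      using t1 by (simp add: less_top)
    have "enn2real (\<Sum>i<K. \<Sum>j<K. if i \<noteq> j \<and> \<pi> j < \<pi> i then Pij K \<alpha> i j else 0) =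
      (\<Sum>i<K. enn2real (\<Sum>j<K. if i \<noteq> j \<and> \<pi> j < \<pi> i then Pij K \<alpha> i j else 0))"
      using enn2real_sum[OF t2] by (simp add: comp_def)
    also have "\<dots> = (\<Sum>i<K. \<Sum>j<K. enn2real (if i \<noteq> j \<and> \<pi> j < \<pi> i then Pij K \<alpha> i j else 0))"
    proof (rule sum.cong[OF refl])
      fix i
      show "enn2real (\<Sum>j<K. if i \<noteq> j \<and> \<pi> j < \<pi> i then Pij K \<alpha> i j else 0) =
        (\<Sum>j<K. enn2real (if i \<noteq> j \<and> \<pi> j < \<pi> i then Pij K \<alpha> i j else 0))"
        using enn2real_sum[of "{..<K}" "\<lambda>j. if i \<noteq> j \<and> \<pi> j < \<pi> i then Pij K \<alpha> i j else 0"] t1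
        by (simp add: comp_def)
    qed
    also have "\<dots> = (\<Sum>i<K. \<Sum>j<K. if i \<noteq> j \<and> \<pi> j < \<pi> i then enn2real (Pij K \<alpha> i j) else 0)"
      by (intro sum.cong refl) auto
    finally show ?thesis using c0 by (simp add: enn2real_mult)
  qed
  finally show ?thesis unfolding c_def .
qed



lemma pair_formula:
  fixes q :: "nat \<Rightarrow> nat \<Rightarrow> real" and \<pi> :: "nat \<Rightarrow> nat"
  assumes inj: "inj_on \<pi> {..<K}"
  shows "(\<Sum>i<K. \<Sum>j<K. if i \<noteq> j \<and> \<pi> j < \<pi> i then q i j else 0) =
         (\<Sum>i<K. \<Sum>j<K. if j < i then (if \<pi> j < \<pi> i then q i j else q j i) else 0)"
proof -
  have "(\<Sum>i<K. \<Sum>j<K. if i \<noteq> j \<and> \<pi> j < \<pi> i then q i j else 0) =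
        (\<Sum>i<K. \<Sum>j<K. (if j < i \<and> \<pi> j < \<pi> i then q i j else 0) + (if i < j \<and> \<pi> j < \<pi> i then q i j else 0))"
    by (intro sum.cong refl) auto
  also have "\<dots> = (\<Sum>i<K. \<Sum>j<K. if j < i \<and> \<pi> j < \<pi> i then q i j else 0) +
                  (\<Sum>i<K. \<Sum>j<K. if i < j \<and> \<pi> j < \<pi> i then q i j else 0)"
    by (simp add: sum.distrib)
  also have "(\<Sum>i<K. \<Sum>j<K. if i < j \<and> \<pi> j < \<pi> i then q i j else 0) =
             (\<Sum>i<K. \<Sum>j<K. if j < i \<and> \<pi> i < \<pi> j then q j i else 0)"
    by (rule sum.swap)
  also have "(\<Sum>i<K. \<Sum>j<K. if j < i \<and> \<pi> j < \<pi> i then q i j else 0) +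
             (\<Sum>i<K. \<Sum>j<K. if j < i \<and> \<pi> i < \<pi> j then q j i else 0) =
             (\<Sum>i<K. \<Sum>j<K. (if j < i \<and> \<pi> j < \<pi> i then q i j else 0) + (if j < i \<and> \<pi> i < \<pi> j then q j i else 0))"
    by (simp add: sum.distrib)
  also have "\<dots> = (\<Sum>i<K. \<Sum>j<K. if j < i then (if \<pi> j < \<pi> i then q i j else q j i) else 0)"
  proof (intro sum.cong refl)
    fix i j assume "i \<in> {..<K}" "j \<in> {..<K}"
    then have "j < i \<Longrightarrow> \<pi> j \<noteq> \<pi> i" using inj by (metis inj_on_eq_iff less_irrefl)
    then show "(if j < i \<and> \<pi> j < \<pi> i then q i j else 0) + (if j < i \<and> \<pi> i < \<pi> j then q j i else 0) =
       (if j < i then (if \<pi> j < \<pi> i then q i j else q j i) else 0)"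
      by auto
  qed
  finally show ?thesis .
qed

lemma comb_main:
  fixes q :: "nat \<Rightarrow> nat \<Rightarrow> real" and \<alpha> :: "nat \<Rightarrow> real"
  assumes qeq: "\<And>i j. i < K \<Longrightarrow> j < K \<Longrightarrow> \<alpha> i = \<alpha> j \<Longrightarrow> q i j = q j i"
    and qlt: "\<And>i j. i < K \<Longrightarrow> j < K \<Longrightarrow> \<alpha> j < \<alpha> i \<Longrightarrow> q j i < q i j"
    and rk: "\<pi> \<in> rankings K"
  defines "F \<equiv> \<lambda>\<pi>. (\<Sum>i<K. \<Sum>j<K. if i \<noteq> j \<and> \<pi> j < \<pi> i then q i j else 0)"
  defines "M \<equiv> (\<Sum>i<K. \<Sum>j<K. if j < i then max (q i j) (q j i) else 0)"
  shows "F \<pi> \<le> M" and "\<pi> \<in> Pi_alpha K \<alpha> \<Longrightarrow> F \<pi> = M" and "\<pi> \<notin> Pi_alpha K \<alpha> \<Longrightarrow> F \<pi> < M"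
proof -
  have inj: "inj_on \<pi> {..<K}" using rk unfolding rankings_def bij_betw_def by simp
  have Fp: "F \<pi> = (\<Sum>i<K. \<Sum>j<K. if j < i then (if \<pi> j < \<pi> i then q i j else q j i) else 0)"
    unfolding F_def by (rule pair_formula[OF inj])
  have tle: "(if j < i then (if \<pi> j < \<pi> i then q i j else q j i) else 0) \<le> (if j < i then max (q i j) (q j i) else 0)" for i j
    by auto
  show "F \<pi> \<le> M" unfolding Fp M_def by (intro sum_mono tle)
  show "F \<pi> = M" if pa: "\<pi> \<in> Pi_alpha K \<alpha>"
    unfolding Fp M_def
  proof (intro sum.cong refl)
    fix i j assume i: "i \<in> {..<K}" and j: "j \<in> {..<K}"
    have "j < i \<Longrightarrow> \<pi> j \<noteq> \<pi> i" using inj i j by (metis inj_on_eq_iff less_irrefl)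
    moreover have "\<pi> j < \<pi> i \<Longrightarrow> \<alpha> j \<le> \<alpha> i" using pa i j unfolding Pi_alpha_def by auto
    moreover have "\<pi> i < \<pi> j \<Longrightarrow> \<alpha> i \<le> \<alpha> j" using pa i j unfolding Pi_alpha_def by auto
    moreover have "\<alpha> j \<le> \<alpha> i \<Longrightarrow> q j i \<le> q i j" using qeq[of i j] qlt[of i j] i j
      by (cases "\<alpha> j = \<alpha> i") (auto simp: less_le)
    moreover have "\<alpha> i \<le> \<alpha> j \<Longrightarrow> q i j \<le> q j i" using qeq[of j i] qlt[of j i] i j
      by (cases "\<alpha> j = \<alpha> i") (auto simp: less_le)
    ultimately show "(if j < i then (if \<pi> j < \<pi> i then q i j else q j i) else 0) = (if j < i then max (q i j) (q j i) else 0)"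
      by (auto simp: max_def)
  qed
  show "F \<pi> < M" if npa: "\<pi> \<notin> Pi_alpha K \<alpha>"
  proof -
    obtain a b where ab: "a < K" "b < K" "\<pi> b < \<pi> a" "\<alpha> a < \<alpha> b"
      using npa rk unfolding Pi_alpha_def by (auto simp: not_le)
    have qab: "q a b < q b a" using qlt[of b a] ab by simp
    have "a \<noteq> b" using ab by auto
    then obtain i j where ij: "i < K" "j < K" "j < i"
      "(if \<pi> j < \<pi> i then q i j else q j i) < max (q i j) (q j i)"
    proof (cases "b < a")
      case True
      then show ?thesis using that[of a b] ab qab by auto
    next
      case False
      then have "a < b" using \<open>a \<noteq> b\<close> by auto
      then show ?thesis using that[of b a] ab qab by auto
    qed
    show ?thesis unfolding Fp M_def
    proof (rule sum_strict_mono_ex1)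
      show "\<forall>x\<in>{..<K}. (\<Sum>j<K. if j < x then (if \<pi> j < \<pi> x then q x j else q j x) else 0) \<le> (\<Sum>j<K. if j < x then max (q x j) (q j x) else 0)"
        by (intro ballI sum_mono tle)
      show "\<exists>x\<in>{..<K}. (\<Sum>j<K. if j < x then (if \<pi> j < \<pi> x then q x j else q j x) else 0) < (\<Sum>j<K. if j < x then max (q x j) (q j x) else 0)"
      proof (intro bexI)
        show "(\<Sum>j<K. if j < i then (if \<pi> j < \<pi> i then q i j else q j i) else 0) < (\<Sum>j<K. if j < i then max (q i j) (q j i) else 0)"
          by (rule sum_strict_mono_ex1) (use ij tle in \<open>auto intro!: bexI[of _ j]\<close>)
      qed (use ij in auto)
    qed auto
  qed
qed

lemma sort_ranking:
  fixes \<alpha> :: "nat \<Rightarrow> real"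
  shows "\<exists>\<sigma>. \<sigma> \<in> Pi_alpha K \<alpha>"
proof -
  define r where "r k i \<longleftrightarrow> \<alpha> k < \<alpha> i \<or> (\<alpha> k = \<alpha> i \<and> k < i)" for k i
  define \<sigma> where "\<sigma> i = card {k\<in>{..<K}. r k i}" for i
  have tot: "r i j \<or> r j i" if "i \<noteq> j" for i j using that unfolding r_def by auto
  have trans: "r a b \<Longrightarrow> r b c \<Longrightarrow> r a c" for a b c unfolding r_def by auto
  have irr: "\<not> r i i" for i unfolding r_def by auto
  have mono: "\<sigma> j < \<sigma> i" if "r j i" "j < K" for i j
  proof -
    have sub: "{k\<in>{..<K}. r k j} \<subseteq> {k\<in>{..<K}. r k i}" using that trans by blast
    have "j \<in> {k\<in>{..<K}. r k i} - {k\<in>{..<K}. r k j}" using that irr by auto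
    then have "{k\<in>{..<K}. r k j} \<subset> {k\<in>{..<K}. r k i}" using sub by blast
    then show ?thesis unfolding \<sigma>_def by (intro psubset_card_mono) auto
  qed
  have range: "\<sigma> i < K" if "i < K" for i
  proof -
    have "i \<in> {..<K} - {k\<in>{..<K}. r k i}" using that irr by simp
    then have "{k\<in>{..<K}. r k i} \<subset> {..<K}" by blast
    then have "card {k\<in>{..<K}. r k i} < card {..<K::nat}" by (intro psubset_card_mono) auto
    then show ?thesis unfolding \<sigma>_def by simp
  qed
  have inj: "inj_on \<sigma> {..<K}"
  proof (rule inj_onI)
    fix i j assume "i \<in> {..<K}" "j \<in> {..<K}" "\<sigma> i = \<sigma> j"
    then show "i = j" using tot[of i j] mono[of i j] mono[of j i] by fastforce
  qed
  have img: "\<sigma> ` {..<K} = {..<K}"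
    by (rule endo_inj_surj) (use range inj in auto)
  have "\<sigma> \<in> rankings K" unfolding rankings_def bij_betw_def using inj img by simp
  moreover have "\<forall>i<K. \<forall>j<K. \<sigma> i > \<sigma> j \<longrightarrow> \<alpha> i \<ge> \<alpha> j"
  proof (intro allI impI)
    fix i j assume ij: "i < K" "j < K" "\<sigma> i > \<sigma> j"
    then have "i \<noteq> j" by auto
    then have "r j i" using tot[of i j] mono[of j i] ij by (metis less_asym mono)
    then show "\<alpha> i \<ge> \<alpha> j" unfolding r_def by auto
  qed
  ultimately show ?thesis unfolding Pi_alpha_def by blast
qed



lemma enn2real_strict: "(a::ennreal) < b \<Longrightarrow> b < top \<Longrightarrow> enn2real a < enn2real b"
  by (metis enn2real_nonneg ennreal_enn2real ennreal_less_iff less_top order.strict_trans)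

theorem theorem1:
  fixes K :: nat and \<alpha> :: "nat \<Rightarrow> real"
  assumes "K \<ge> 2" and "\<forall>i<K. 0 < \<alpha> i"
  shows "Pi_alpha K \<alpha> = {\<pi>. is_arg_max (expected_tau K \<alpha>) (\<lambda>\<pi>. \<pi> \<in> rankings K) \<pi>}"
proof -
  note K = assms(1) and ap = assms(2)
  have K1: "K \<ge> 1" using K by simp
  define c where "c = 2 / (real K * (real K - 1))"
  have c0: "c > 0" using K by (simp add: c_def)
  define q where "q i j = enn2real (Pij K \<alpha> i j)" for i j
  define F where "F \<pi> = (\<Sum>i<K. \<Sum>j<K. if i \<noteq> j \<and> \<pi> j < \<pi> i then q i j else 0)" for \<pi> :: "nat \<Rightarrow> nat"
  define M where "M = (\<Sum>i<K. \<Sum>j<K. if j < i then max (q i j) (q j i) else (0::real))"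
  have E: "expected_tau K \<alpha> \<pi> = c * F \<pi>" for \<pi>
    unfolding exp_formula[OF K ap] c_def F_def q_def ..
  have fin: "Tot K \<alpha> \<noteq> \<infinity>" using Tot_fin[OF K ap] by simp
  have qeq: "q i j = q j i" if "i < K" "j < K" "\<alpha> i = \<alpha> j" for i j
    unfolding q_def using P_eq[OF that] by simp
  have qlt: "q j i < q i j" if "i < K" "j < K" "\<alpha> j < \<alpha> i" for i j
  proof -
    have "Pij K \<alpha> j i < Pij K \<alpha> i j" by (rule P_less[OF K ap that fin])
    moreover have "Pij K \<alpha> i j < top" using P_le_Tot[OF K1 ap, of i j] Tot_fin[OF K ap] by (simp add: le_less_trans)
    ultimately show ?thesis unfolding q_def by (rule enn2real_strict)
  qed
  have cm1: "F y \<le> M" if "y \<in> rankings K" for y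
    unfolding F_def M_def by (rule comb_main(1)[of K \<alpha> q]) (use qeq qlt that in blast)+
  have cm2: "F y = M" if "y \<in> rankings K" "y \<in> Pi_alpha K \<alpha>" for y
    unfolding F_def M_def by (rule comb_main(2)[of K \<alpha> q]) (use qeq qlt that in blast)+
  have cm3: "F y < M" if "y \<in> rankings K" "y \<notin> Pi_alpha K \<alpha>" for y
    unfolding F_def M_def by (rule comb_main(3)[of K \<alpha> q]) (use qeq qlt that in blast)+
  show ?thesis
  proof
    show "Pi_alpha K \<alpha> \<subseteq> {\<pi>. is_arg_max (expected_tau K \<alpha>) (\<lambda>\<pi>. \<pi> \<in> rankings K) \<pi>}"
    proof
      fix \<pi> assume pa: "\<pi> \<in> Pi_alpha K \<alpha>"
      then have rk: "\<pi> \<in> rankings K" unfolding Pi_alpha_def by simp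
      have "expected_tau K \<alpha> y \<le> expected_tau K \<alpha> \<pi>" if "y \<in> rankings K" for y
        unfolding E using cm1[OF that] cm2[OF rk pa] c0 by simp
      then show "\<pi> \<in> {\<pi>. is_arg_max (expected_tau K \<alpha>) (\<lambda>\<pi>. \<pi> \<in> rankings K) \<pi>}"
        using rk by (simp add: is_arg_max_linorder)
    qed
    show "{\<pi>. is_arg_max (expected_tau K \<alpha>) (\<lambda>\<pi>. \<pi> \<in> rankings K) \<pi>} \<subseteq> Pi_alpha K \<alpha>"
    proof
      fix \<pi> assume "\<pi> \<in> {\<pi>. is_arg_max (expected_tau K \<alpha>) (\<lambda>\<pi>. \<pi> \<in> rankings K) \<pi>}"
      then have rk: "\<pi> \<in> rankings K" and mx: "\<And>y. y \<in> rankings K \<Longrightarrow> expected_tau K \<alpha> y \<le> expected_tau K \<alpha> \<pi>"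
        by (auto simp: is_arg_max_linorder)
      show "\<pi> \<in> Pi_alpha K \<alpha>"
      proof (rule ccontr)
        assume npa: "\<pi> \<notin> Pi_alpha K \<alpha>"
        obtain \<sigma> where s: "\<sigma> \<in> Pi_alpha K \<alpha>" using sort_ranking by blast
        then have srk: "\<sigma> \<in> rankings K" unfolding Pi_alpha_def by simp
        have "F \<pi> < F \<sigma>" using cm3[OF rk npa] cm2[OF srk s] by simp
        then have "expected_tau K \<alpha> \<pi> < expected_tau K \<alpha> \<sigma>" unfolding E using c0 by simp
        then show False using mx[OF srk] by simp
      qed
    qed
  qed
qed


end
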